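(* For a finite group $G$ and a nonnormal subgroup $H$ of $G$ with $H\cong\mathbb Z_2$, let $r$ be the number of fixed points of the left translation action of $H$ on $G/H$ (equivalently $r=[Z_G(H):H]$, where $Z_G(H)$ is the centralizer of $H$) and let $q$ be the number of two-element orbits of this action (so $[G:H]=r+2q$). Then a pair $(r,q)$ of positive integers arises in this way from some such $G$ and $H$ if and only if $r$ divides $2q$. *)

theory Defs
  imports "HOL-Algebra.Coset"
begin

definition left_cosets :: "('a, 'b) monoid_scheme \<Rightarrow> 'a set \<Rightarrow> 'a set set" where
  "left_cosets G H = {x <#\<^bsub>G\<^esub> H | x. x \<in> carrier G}"

definition fixed_cosets :: "('a, 'b) monoid_scheme \<Rightarrow> 'a set \<Rightarrow> 'a set set" where
  "fixed_cosets G H = {C \<in> left_cosets G H. \<forall>h\<in>H. h <#\<^bsub>G\<^esub> C = C}"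

definition coset_orbit :: "('a, 'b) monoid_scheme \<Rightarrow> 'a set \<Rightarrow> 'a set \<Rightarrow> 'a set set" where
  "coset_orbit G H C = {h <#\<^bsub>G\<^esub> C | h. h \<in> H}"

definition two_elem_orbits :: "('a, 'b) monoid_scheme \<Rightarrow> 'a set \<Rightarrow> 'a set set set" where
  "two_elem_orbits G H = {Ob. \<exists>C\<in>left_cosets G H. Ob = coset_orbit G H C \<and> card Ob = 2}"

definition arises_from :: "('a, 'b) monoid_scheme \<Rightarrow> 'a set \<Rightarrow> nat \<Rightarrow> nat \<Rightarrow> bool" where
  "arises_from G H r q \<longleftrightarrow>
     group G \<and> finite (carrier G) \<and> subgroup H G \<and> \<not> (H \<lhd> G) \<and> card H = 2 \<and>
     r = card (fixed_cosets G H) \<and> q = card (two_elem_orbits G H)"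

end

theory Submission
  imports Defs "HOL-Library.Countable"
begin


lemma card2_iff: "card {a, b} = 2 \<longleftrightarrow> a \<noteq> b"
  by (cases "a = b") auto

context group begin

lemma lc2: "x \<in> carrier G \<Longrightarrow> x <# {a, b} = {x \<otimes> a, x \<otimes> b}"
  unfolding l_coset_def by auto

lemma counts:
  assumes fin: "finite (carrier G)" and hc: "h \<in> carrier G" and h1: "h \<noteq> \<one>"
    and hh: "h \<otimes> h = \<one>" and HH: "H = {\<one>, h}"
  defines "Cz \<equiv> {x \<in> carrier G. h \<otimes> x = x \<otimes> h}"
  shows "2 * card (fixed_cosets G H) = card Cz"
    and "2 * card (left_cosets G H) = order G"
    and "2 * card (two_elem_orbits G H) + card (fixed_cosets G H) = card (left_cosets G H)"
proof -
  have cos: "x <# H = {x, x \<otimes> h}" if "x \<in> carrier G" for x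
    using that hc by (simp add: HH lc2)
  have xneq: "x \<noteq> x \<otimes> h" if "x \<in> carrier G" for x
    using that hc h1 by (metis l_cancel_one)
  have card2: "card {x, x \<otimes> h} = 2" if "x \<in> carrier G" for x
    using xneq[OF that] by simp
  have L: "left_cosets G H = (\<lambda>x. {x, x \<otimes> h}) ` carrier G"
    unfolding left_cosets_def using cos by auto
  have same: "{y, y \<otimes> h} = {x, x \<otimes> h}" if "x \<in> carrier G" "y \<in> {x, x \<otimes> h}" for x y
  proof -
    have "y = x \<or> y = x \<otimes> h" using that by auto
    then show ?thesis
    proof
      assume "y = x \<otimes> h"
      then have "y \<otimes> h = x" using that hc hh by (simp add: m_assoc)
      then show ?thesis using \<open>y = x \<otimes> h\<close> by auto
    qed simp
  qed
  have disj: "c1 \<inter> c2 = {}" if "c1 \<in> left_cosets G H" "c2 \<in> left_cosets G H" "c1 \<noteq> c2" for c1 c2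
    using that unfolding L using same hc by (smt (verit, ccfv_SIG) disjoint_iff image_iff m_closed insert_iff singletonD)
  have finL: "finite (left_cosets G H)" unfolding L using fin by simp
  have UL: "\<Union> (left_cosets G H) = carrier G" unfolding L using hc by auto
  have "2 * card (left_cosets G H) = card (\<Union>(left_cosets G H))"
    apply (rule card_partition[OF finL])
    using UL fin card2 disj by (auto simp: L)
  then show "2 * card (left_cosets G H) = order G"
    unfolding order_def UL .
  have hcos: "h <# {x, x \<otimes> h} = {h \<otimes> x, h \<otimes> x \<otimes> h}" if "x \<in> carrier G" for x
    using that hc hh by (simp add: lc2 m_assoc)
  have ocos: "\<one> <# {x, x \<otimes> h} = {x, x \<otimes> h}" if "x \<in> carrier G" for x
    using that hc by (simp add: lc2)
  have fixiff: "h <# {x, x \<otimes> h} = {x, x \<otimes> h} \<longleftrightarrow> h \<otimes> x = x \<otimes> h" if x: "x \<in> carrier G" for x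
  proof -
    have "h \<otimes> x \<noteq> x" using x hc h1 by (metis r_cancel_one)
    moreover have "h \<otimes> x \<otimes> h = x" if "h \<otimes> x = x \<otimes> h"
      using that x hc hh by (simp add: m_assoc)
    ultimately show ?thesis using hcos[OF x] x hc xneq[OF x] by (auto simp: doubleton_eq_iff)
  qed
  have F0: "fixed_cosets G H = {C \<in> left_cosets G H. \<one> <# C = C \<and> h <# C = C}"
      unfolding fixed_cosets_def by (auto simp: HH)
  have F: "fixed_cosets G H = (\<lambda>x. {x, x \<otimes> h}) ` Cz"
  proof -
    note F0
    then show ?thesis unfolding L Cz_def using fixiff ocos by auto
  qed
  have CzS: "Cz \<subseteq> carrier G" unfolding Cz_def by auto
  have UF: "\<Union> (fixed_cosets G H) = Cz"
  proof -
    have "x \<otimes> h \<in> Cz" if "x \<in> Cz" for x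
      using that hc unfolding Cz_def by (auto simp: m_assoc[symmetric])
    then show ?thesis unfolding F using CzS by auto
  qed
  have finF: "finite (fixed_cosets G H)" unfolding F using fin CzS finite_subset by blast
  have FL: "fixed_cosets G H \<subseteq> left_cosets G H" unfolding fixed_cosets_def by auto
  have "2 * card (fixed_cosets G H) = card (\<Union>(fixed_cosets G H))"
  proof (rule card_partition[OF finF])
    show "finite (\<Union> (fixed_cosets G H))" using UF fin CzS finite_subset by metis
    show "card c = 2" if "c \<in> fixed_cosets G H" for c using that F CzS card2 by auto
    show "c1 \<inter> c2 = {}" if "c1 \<in> fixed_cosets G H" "c2 \<in> fixed_cosets G H" "c1 \<noteq> c2" for c1 c2
      using that FL disj by blast
  qed
  then show "2 * card (fixed_cosets G H) = card Cz"
    unfolding UF .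
  have orb: "coset_orbit G H C = {C, h <# C}" if CL: "C \<in> left_cosets G H" for C
  proof -
    obtain x where x: "x \<in> carrier G" "C = {x, x \<otimes> h}" using CL L by auto
    have "coset_orbit G H C = {\<one> <# C, h <# C}" unfolding coset_orbit_def HH by auto
    then show ?thesis using ocos x by simp
  qed
  have hL: "h <# C \<in> left_cosets G H" and hh2: "h <# (h <# C) = C" and one1: "\<one> <# C = C"
    if CL: "C \<in> left_cosets G H" for C
  proof -
    obtain x where x: "x \<in> carrier G" "C = {x, x \<otimes> h}" using CL L by auto
    have e: "h <# C = {h \<otimes> x, (h \<otimes> x) \<otimes> h}" using x hc by (simp add: lc2 m_assoc)
    show "h <# C \<in> left_cosets G H" unfolding e L using x hc by auto
    show "h <# (h <# C) = C" unfolding e using x hc hh by (simp add: lc2 m_assoc[symmetric])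
    show "\<one> <# C = C" using x ocos by simp
  qed
  define NF where "NF = left_cosets G H - fixed_cosets G H"
  have NFi: "C \<in> NF \<longleftrightarrow> C \<in> left_cosets G H \<and> h <# C \<noteq> C" for C
    unfolding NF_def F0 using one1 by auto
  have O: "two_elem_orbits G H = (\<lambda>C. {C, h <# C}) ` NF"
  proof -
    have "two_elem_orbits G H = {Ob. \<exists>C\<in>left_cosets G H. Ob = {C, h <# C} \<and> card {C, h <# C} = 2}"
      unfolding two_elem_orbits_def using orb by (metis (no_types, lifting))
    also have "\<dots> = (\<lambda>C. {C, h <# C}) ` NF"
    proof -
      have c2: "card {C, h <# C} = 2 \<longleftrightarrow> C \<noteq> h <# C" for C by (rule card2_iff)
      show ?thesis
      proof
        show "{Ob. \<exists>C\<in>left_cosets G H. Ob = {C, h <# C} \<and> card {C, h <# C} = 2} \<subseteq> (\<lambda>C. {C, h <# C}) ` NF"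
        proof
          fix Ob assume "Ob \<in> {Ob. \<exists>C\<in>left_cosets G H. Ob = {C, h <# C} \<and> card {C, h <# C} = 2}"
          then obtain C where "C \<in> left_cosets G H" "Ob = {C, h <# C}" "card {C, h <# C} = 2" by blast
          then show "Ob \<in> (\<lambda>C. {C, h <# C}) ` NF" unfolding c2 using NFi by auto
        qed
      next
        show "(\<lambda>C. {C, h <# C}) ` NF \<subseteq> {Ob. \<exists>C\<in>left_cosets G H. Ob = {C, h <# C} \<and> card {C, h <# C} = 2}"
        proof
          fix Ob assume "Ob \<in> (\<lambda>C. {C, h <# C}) ` NF"
          then obtain C where "C \<in> NF" "Ob = {C, h <# C}" by blast
          then show "Ob \<in> {Ob. \<exists>C\<in>left_cosets G H. Ob = {C, h <# C} \<and> card {C, h <# C} = 2}"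
            unfolding c2 using NFi by auto
        qed
      qed
    qed
    finally show ?thesis .
  qed
  have NFh: "h <# C \<in> NF" if "C \<in> NF" for C
    using that hL hh2 NFi by metis
  have UO: "\<Union> (two_elem_orbits G H) = NF" unfolding O using NFh by auto
  have finNF: "finite NF" unfolding NF_def using finL by simp
  have finO: "finite (two_elem_orbits G H)" unfolding O using finNF by simp
  have "2 * card (two_elem_orbits G H) = card (\<Union> (two_elem_orbits G H))"
  proof (rule card_partition[OF finO])
    show "finite (\<Union> (two_elem_orbits G H))" using UO finNF by simp
    show "card c = 2" if "c \<in> two_elem_orbits G H" for c using that unfolding O
      using NFi card2_iff by (metis (no_types, lifting) imageE)
    show "c1 \<inter> c2 = {}" if c12: "c1 \<in> two_elem_orbits G H" "c2 \<in> two_elem_orbits G H" "c1 \<noteq> c2" for c1 c2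
    proof (rule ccontr)
      assume ne: "c1 \<inter> c2 \<noteq> {}"
      obtain C1 C2 where c: "C1 \<in> NF" "C2 \<in> NF" "c1 = {C1, h <# C1}" "c2 = {C2, h <# C2}"
        using c12(1,2) unfolding O by auto
      then obtain D where D: "D \<in> c1" "D \<in> c2" using ne by auto
      have "c1 = {D, h <# D}" using D c hh2 NFi by auto
      moreover have "c2 = {D, h <# D}" using D c hh2 NFi by auto
      ultimately show False using c12(3) by simp
    qed
  qed
  moreover have "card NF = card (left_cosets G H) - card (fixed_cosets G H)"
    unfolding NF_def using FL finF by (simp add: card_Diff_subset)
  moreover have "card (fixed_cosets G H) \<le> card (left_cosets G H)" using FL finL card_mono by blast
  ultimately show "2 * card (two_elem_orbits G H) + card (fixed_cosets G H) = card (left_cosets G H)"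
    using UO by simp
qed

lemma two_elem_subgroup:
  assumes "subgroup H G" "card H = 2"
  obtains h where "h \<in> carrier G" "h \<noteq> \<one>" "h \<otimes> h = \<one>" "H = {\<one>, h}"
proof -
  have one: "\<one> \<in> H" using assms(1) subgroup.one_closed by blast
  obtain a b where ab: "H = {a, b}" "a \<noteq> b" using assms(2) card_2_iff by metis
  obtain h where h: "H = {\<one>, h}" "h \<noteq> \<one>" using ab one by auto
  have hc: "h \<in> carrier G" using subgroup.mem_carrier[OF assms(1)] h by simp
  have hH: "h \<in> H" using h by simp
  have "h \<otimes> h \<in> H" by (rule subgroup.m_closed[OF assms(1) hH hH])
  moreover have "h \<otimes> h \<noteq> h" using hc h(2) by (metis r_cancel_one)
  ultimately have "h \<otimes> h = \<one>" using h(1) by simp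
  then show ?thesis using that hc h by simp
qed

lemma centralizer_subgroup:
  assumes hc: "h \<in> carrier G"
  shows "subgroup {x \<in> carrier G. h \<otimes> x = x \<otimes> h} G"
proof (rule subgroupI)
  show "{x \<in> carrier G. h \<otimes> x = x \<otimes> h} \<noteq> {}" using hc by auto
  show "inv a \<in> {x \<in> carrier G. h \<otimes> x = x \<otimes> h}" if "a \<in> {x \<in> carrier G. h \<otimes> x = x \<otimes> h}" for a
  proof -
    have a: "a \<in> carrier G" "h \<otimes> a = a \<otimes> h" using that by auto
    have "inv a \<otimes> h = inv a \<otimes> h \<otimes> (a \<otimes> inv a)" using a(1) hc by simp
    also have "\<dots> = inv a \<otimes> (h \<otimes> a) \<otimes> inv a" using a(1) hc by (simp add: m_assoc)
    also have "\<dots> = inv a \<otimes> (a \<otimes> h) \<otimes> inv a" using a by simp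
    also have "\<dots> = h \<otimes> inv a" using a(1) hc by (simp add: m_assoc[symmetric])
    finally have "inv a \<otimes> h = h \<otimes> inv a" .
    moreover have "inv a \<in> carrier G" using a(1) by simp
    ultimately show ?thesis by (simp only: mem_Collect_eq)
  qed
  show "a \<otimes> b \<in> {x \<in> carrier G. h \<otimes> x = x \<otimes> h}" if "a \<in> {x \<in> carrier G. h \<otimes> x = x \<otimes> h}" "b \<in> {x \<in> carrier G. h \<otimes> x = x \<otimes> h}" for a b
  proof -
    have a: "a \<in> carrier G" "h \<otimes> a = a \<otimes> h" and b: "b \<in> carrier G" "h \<otimes> b = b \<otimes> h" using that by auto
    have "h \<otimes> (a \<otimes> b) = (h \<otimes> a) \<otimes> b" using a(1) b(1) hc by (simp add: m_assoc)
    also have "\<dots> = a \<otimes> (h \<otimes> b)" using a b(1) hc by (simp add: m_assoc)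
    also have "\<dots> = (a \<otimes> b) \<otimes> h" using a(1) b hc by (simp add: m_assoc)
    finally show ?thesis using a(1) b(1) by simp
  qed
qed auto

lemma necessity:
  assumes fin: "finite (carrier G)" and sub: "subgroup H G" and c2: "card H = 2"
  shows "card (fixed_cosets G H) dvd 2 * card (two_elem_orbits G H)"
proof -
  obtain h where h: "h \<in> carrier G" "h \<noteq> \<one>" "h \<otimes> h = \<one>" "H = {\<one>, h}"
    using two_elem_subgroup[OF sub c2] by blast
  define Cz where "Cz = {x \<in> carrier G. h \<otimes> x = x \<otimes> h}"
  note cs = counts[OF fin h, folded Cz_def]
  have "card (rcosets Cz) * card Cz = order G"
    using lagrange centralizer_subgroup[OF h(1)] Cz_def by simp
  then obtain k where k: "order G = card Cz * k" by (metis mult.commute)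
  define F where "F = card (fixed_cosets G H)"
  define L where "L = card (left_cosets G H)"
  define Ob where "Ob = card (two_elem_orbits G H)"
  have "2 * F = card Cz" "2 * L = order G" "2 * Ob + F = L" using cs unfolding F_def L_def Ob_def by auto
  then have "2 * L = 2 * (F * k)" using k by (simp add: mult.assoc)
  then have "L = F * k" by simp
  then have "2 * Ob = F * k - F" using \<open>2 * Ob + F = L\<close> by linarith
  also have "\<dots> = F * (k - 1)" by (simp add: diff_mult_distrib2)
  finally have e: "2 * Ob = F * (k - 1)" .
  show ?thesis unfolding F_def[symmetric] Ob_def[symmetric] e by (rule dvd_triv_left)
qed

end



definition m3 :: "nat \<Rightarrow> nat \<Rightarrow> int \<times> int \<times> bool \<Rightarrow> int \<times> int \<times> bool \<Rightarrow> int \<times> int \<times> bool" where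
  "m3 a N x y = (case x of (c, k, e) \<Rightarrow> case y of (c', k', e') \<Rightarrow>
     ((c + c') mod int a, (k + (if e then - k' else k')) mod int N, e \<noteq> e'))"

definition S3 :: "nat \<Rightarrow> nat \<Rightarrow> (int \<times> int \<times> bool) set" where
  "S3 a N = {0..<int a} \<times> {0..<int N} \<times> UNIV"

lemma m3_simp: "m3 a N (c, k, e) (c', k', e') = ((c + c') mod int a, (k + (if e then - k' else k')) mod int N, e \<noteq> e')"
  by (simp add: m3_def)

lemma m3_closed: "0 < a \<Longrightarrow> 0 < N \<Longrightarrow> m3 a N t u \<in> S3 a N"
  by (cases t; cases u) (simp add: m3_simp S3_def)

lemma m3_assoc: "m3 a N (m3 a N t u) v = m3 a N t (m3 a N u v)"
proof -
  obtain c k e where t: "t = (c, k, e)" by (cases t) auto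
  obtain c' k' e' where u: "u = (c', k', e')" by (cases u) auto
  obtain c'' k'' e'' where v: "v = (c'', k'', e'')" by (cases v) auto
  show ?thesis unfolding t u v m3_simp
    by (cases e; cases e'; simp add: mod_simps algebra_simps)
qed

lemma m3_one: "t \<in> S3 a N \<Longrightarrow> m3 a N (0, 0, False) t = t"
  by (cases t) (auto simp: m3_simp S3_def)

lemma m3_inv: "0 < a \<Longrightarrow> 0 < N \<Longrightarrow> t \<in> S3 a N \<Longrightarrow> \<exists>u\<in>S3 a N. m3 a N u t = (0, 0, False)"
proof -
  assume a: "0 < a" and N: "0 < N" and t: "t \<in> S3 a N"
  obtain c k e where tt: "t = (c, k, e)" by (cases t) auto
  define u where "u = ((- c) mod int a, if e then k else (- k) mod int N, e)"
  have "u \<in> S3 a N" using a N t unfolding u_def S3_def tt by auto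
  moreover have "m3 a N u t = (0, 0, False)"
    unfolding u_def tt m3_simp by (cases e) (simp_all add: mod_simps)
  ultimately show ?thesis by blast
qed

definition DG :: "nat \<Rightarrow> nat \<Rightarrow> nat monoid" where
  "DG a N = \<lparr>carrier = to_nat ` S3 a N,
     mult = (\<lambda>x y. to_nat (m3 a N (from_nat x) (from_nat y))),
     one = to_nat ((0::int), (0::int), False)\<rparr>"

lemma DG_simps: "carrier (DG a N) = to_nat ` S3 a N"
  "x \<otimes>\<^bsub>DG a N\<^esub> y = to_nat (m3 a N (from_nat x) (from_nat y))"
  "\<one>\<^bsub>DG a N\<^esub> = to_nat ((0::int), (0::int), False)"
  by (simp_all add: DG_def)

lemma DG_mult_to_nat: "to_nat t \<otimes>\<^bsub>DG a N\<^esub> to_nat u = to_nat (m3 a N t u)"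
  by (simp add: DG_simps)

lemma DG_group: assumes "0 < a" "0 < N" shows "group (DG a N)"
proof (rule groupI)
  fix x y assume "x \<in> carrier (DG a N)" "y \<in> carrier (DG a N)"
  then show "x \<otimes>\<^bsub>DG a N\<^esub> y \<in> carrier (DG a N)" using m3_closed[OF assms] by (auto simp: DG_simps)
next
  show "\<one>\<^bsub>DG a N\<^esub> \<in> carrier (DG a N)" using assms by (auto simp: DG_simps S3_def)
next
  fix x y z assume "x \<in> carrier (DG a N)" "y \<in> carrier (DG a N)" "z \<in> carrier (DG a N)"
  then show "x \<otimes>\<^bsub>DG a N\<^esub> y \<otimes>\<^bsub>DG a N\<^esub> z = x \<otimes>\<^bsub>DG a N\<^esub> (y \<otimes>\<^bsub>DG a N\<^esub> z)"
    by (auto simp: DG_simps m3_assoc)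
next
  fix x assume "x \<in> carrier (DG a N)"
  then show "\<one>\<^bsub>DG a N\<^esub> \<otimes>\<^bsub>DG a N\<^esub> x = x" by (auto simp: DG_simps m3_one)
next
  fix x assume "x \<in> carrier (DG a N)"
  then obtain t where t: "t \<in> S3 a N" "x = to_nat t" by (auto simp: DG_simps)
  then obtain u where "u \<in> S3 a N" "m3 a N u t = (0, 0, False)" using m3_inv[OF assms] by blast
  then show "\<exists>y\<in>carrier (DG a N). y \<otimes>\<^bsub>DG a N\<^esub> x = \<one>\<^bsub>DG a N\<^esub>"
    using t by (auto simp: DG_simps)
qed


context group begin

lemma subgroup_two:
  assumes hc: "h \<in> carrier G" and hh: "h \<otimes> h = \<one>"
  shows "subgroup {\<one>, h} G"
proof (rule subgroupI)
  have ih: "inv h = h" using hc hh by (simp add: inv_equality)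
  show "inv x \<in> {\<one>, h}" if "x \<in> {\<one>, h}" for x using that ih by auto
  show "x \<otimes> y \<in> {\<one>, h}" if "x \<in> {\<one>, h}" "y \<in> {\<one>, h}" for x y using that hc hh by auto
qed (use hc in auto)

lemma not_normal_two:
  assumes hc: "h \<in> carrier G" and h1: "h \<noteq> \<one>" and x: "x \<in> carrier G" and nc: "x \<otimes> h \<noteq> h \<otimes> x"
  shows "\<not> ({\<one>, h} \<lhd> G)"
proof
  assume "{\<one>, h} \<lhd> G"
  then have "{\<one>, h} #> x = x <# {\<one>, h}" using x normal.coset_eq by blast
  then have e: "{x, h \<otimes> x} = {x, x \<otimes> h}" using x hc unfolding r_coset_def l_coset_def by auto
  have "x \<otimes> h \<noteq> x" using x hc h1 by (metis l_cancel_one)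
  then show False using e nc by (auto simp: doubleton_eq_iff)
qed

end

lemma m3_h_right: "t \<in> S3 a N \<Longrightarrow> m3 a N t (0, 0, True) = (fst t, fst (snd t), \<not> snd (snd t))"
  by (cases t) (auto simp: m3_simp S3_def)

lemma m3_h_left: "t \<in> S3 a N \<Longrightarrow> m3 a N (0, 0, True) t = (fst t, (- fst (snd t)) mod int N, \<not> snd (snd t))"
  by (cases t) (auto simp: m3_simp S3_def)

lemma cent3: "{t \<in> S3 a N. m3 a N (0, 0, True) t = m3 a N t (0, 0, True)}
   = {0..<int a} \<times> {k \<in> {0..<int N}. (- k) mod int N = k} \<times> UNIV"
  by (auto simp: m3_h_left m3_h_right S3_def)

lemma negmod: assumes "0 < k" "k < n" shows "(- k) mod n = n - (k::int)"
proof -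
  have "(- k) mod n = (n - k) mod n" by (simp add: mod_simps)
  also have "\<dots> = n - k" using assms by (intro mod_pos_pos_trivial) auto
  finally show ?thesis .
qed

lemma K_odd: "odd N \<Longrightarrow> {k \<in> {0..<int N}. (- k) mod int N = k} = {0}"
proof (safe)
  fix k assume "odd N" "k \<in> {0..<int N}" "(- k) mod int N = k"
  moreover have False if "0 < k"
  proof -
    have "2 * k = int N" using negmod[of k "int N"] that calculation by auto
    then have "even (int N)" by (metis dvd_triv_left)
    then show False using calculation(1) by simp
  qed
  ultimately show "k = 0" by force
qed (auto intro: Nat.gr0I)

lemma K_even: "0 < m \<Longrightarrow> {k \<in> {0..<int (2 * m)}. (- k) mod int (2 * m) = k} = {0, int m}"
proof (safe)
  fix k assume m: "0 < m" and "k \<in> {0..<int (2 * m)}" "(- k) mod int (2 * m) = k" "k \<noteq> 0"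
  then show "k = int m" using negmod[of k "int (2*m)"] by auto
next
  assume "0 < m" then show "(- int m) mod int (2 * m) = int m" using negmod[of "int m" "int (2*m)"] by auto
qed auto


lemma DG_arises:
  fixes a N :: nat
  assumes a: "0 < a" and N: "3 \<le> N"
  defines "K \<equiv> {k \<in> {0..<int N}. (- k) mod int N = k}"
  shows "arises_from (DG a N) {to_nat ((0::int), (0::int), False), to_nat ((0::int), (0::int), True)}
           (a * card K) ((a * N - a * card K) div 2)"
proof -
  interpret group "DG a N" using DG_group a N by simp
  define h where "h = to_nat ((0::int), (0::int), True)"
  have one: "\<one>\<^bsub>DG a N\<^esub> = to_nat ((0::int), (0::int), False)" by (simp add: DG_simps)
  have inj: "to_nat x = to_nat y \<longleftrightarrow> x = y" for x y :: "int \<times> int \<times> bool"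
    using inj_eq[OF inj_to_nat] .
  have hS: "((0::int), (0::int), True) \<in> S3 a N" using a N by (simp add: S3_def)
  have hc: "h \<in> carrier (DG a N)" using hS by (simp add: DG_simps h_def)
  have hh: "h \<otimes>\<^bsub>DG a N\<^esub> h = \<one>\<^bsub>DG a N\<^esub>" unfolding h_def one DG_mult_to_nat by (simp add: m3_simp)
  have h1: "h \<noteq> \<one>\<^bsub>DG a N\<^esub>" unfolding h_def one inj by simp
  have fin: "finite (carrier (DG a N))" by (simp add: DG_simps S3_def)
  define H where "H = {\<one>\<^bsub>DG a N\<^esub>, h}"
  have Heq: "{to_nat ((0::int), (0::int), False), to_nat ((0::int), (0::int), True)} = H"
    unfolding H_def one h_def ..
  have sub: "subgroup H (DG a N)" unfolding H_def by (rule subgroup_two[OF hc hh])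
  have cH: "card H = 2" unfolding H_def using h1 by simp
  define x where "x = to_nat ((0::int), (1::int), False)"
  have xS: "((0::int), (1::int), False) \<in> S3 a N" using N a by (simp add: S3_def)
  have xc: "x \<in> carrier (DG a N)" using xS by (simp add: DG_simps x_def)
  have "x \<otimes>\<^bsub>DG a N\<^esub> h = to_nat ((0::int), 1 mod int N, True)"
    unfolding x_def h_def DG_mult_to_nat by (simp add: m3_simp)
  moreover have "h \<otimes>\<^bsub>DG a N\<^esub> x = to_nat ((0::int), (- 1) mod int N, True)"
    unfolding x_def h_def DG_mult_to_nat by (simp add: m3_simp)
  moreover have "1 mod int N = 1" using N by simp
  moreover have "(- 1) mod int N = int N - 1" using negmod[of 1 "int N"] N by simp
  ultimately have nc: "x \<otimes>\<^bsub>DG a N\<^esub> h \<noteq> h \<otimes>\<^bsub>DG a N\<^esub> x" using N inj by simp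
  have nn: "\<not> (H \<lhd> DG a N)" unfolding H_def by (rule not_normal_two[OF hc h1 xc nc])
  note cs = counts[OF fin hc h1 hh H_def]
  have Cz: "{y \<in> carrier (DG a N). h \<otimes>\<^bsub>DG a N\<^esub> y = y \<otimes>\<^bsub>DG a N\<^esub> h}
      = to_nat ` {t \<in> S3 a N. m3 a N (0, 0, True) t = m3 a N t (0, 0, True)}"
    unfolding DG_simps h_def by (auto simp: inj)
  have cCz: "card {y \<in> carrier (DG a N). h \<otimes>\<^bsub>DG a N\<^esub> y = y \<otimes>\<^bsub>DG a N\<^esub> h} = a * card K * 2"
    unfolding Cz cent3 K_def[symmetric] using inj_to_nat
    by (simp add: card_image inj_on_def card_cartesian_product)
  have cG: "order (DG a N) = a * N * 2"
    unfolding order_def DG_simps S3_def using inj_to_nat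
    by (simp add: card_image inj_on_def card_cartesian_product)
  have r: "card (fixed_cosets (DG a N) H) = a * card K" using cs(1) cCz by simp
  have L: "card (left_cosets (DG a N) H) = a * N" using cs(2) cG by simp
  have q: "card (two_elem_orbits (DG a N) H) = (a * N - a * card K) div 2" using cs(3) r L by simp
  show ?thesis unfolding arises_from_def Heq using DG_group a N fin sub nn cH r q by simp
qed

lemma nec_lemma:
  assumes "arises_from G H r q"
  shows "r dvd 2 * q"
proof -
  have "group G" "finite (carrier G)" "subgroup H G" "card H = 2"
    "r = card (fixed_cosets G H)" "q = card (two_elem_orbits G H)"
    using assms unfolding arises_from_def by auto
  then show ?thesis using group.necessity by metis
qed

theorem proposition7p1:
  fixes r q :: nat
  assumes "0 < r" and "0 < q"
  shows "((\<exists>(G :: nat monoid) H. arises_from G H r q) \<longleftrightarrow> r dvd 2 * q)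
       \<and> (\<forall>(G :: ('a, 'b) monoid_scheme) H. arises_from G H r q \<longrightarrow> r dvd 2 * q)"
proof -
  have suff: "\<exists>(G :: nat monoid) H. arises_from G H r q" if d: "r dvd 2 * q"
  proof -
    define Hs where "Hs = {to_nat ((0::int), (0::int), False), to_nat ((0::int), (0::int), True)}"
    obtain j where j: "2 * q = r * j" using d by (auto elim: dvdE)
    have j0: "0 < j" using j assms by (cases j) auto
    show ?thesis
    proof (cases "even r")
      case True
      then obtain a where ra: "r = 2 * a" by (auto elim: evenE)
      have a0: "0 < a" using ra assms by simp
      have qa: "q = a * j" using j ra by simp
      have N3: "3 \<le> 2 * (j + 1)" using j0 by simp
      have cK: "card {k \<in> {0..<int (2 * (j + 1))}. (- k) mod int (2 * (j + 1)) = k} = 2"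
        using K_even[of "j + 1"] by simp
      have "arises_from (DG a (2 * (j + 1))) Hs (a * 2) ((a * (2 * (j + 1)) - a * 2) div 2)"
        using DG_arises[OF a0 N3] unfolding cK Hs_def .
      moreover have "a * 2 = r" using ra by simp
      moreover have "(a * (2 * (j + 1)) - a * 2) div 2 = q" using qa by (simp add: algebra_simps)
      ultimately show ?thesis by auto
    next
      case False
      have "coprime r 2" using False by simp
      then have "r dvd q" using d by (simp add: coprime_dvd_mult_right_iff)
      then obtain l where l: "q = r * l" by (auto elim: dvdE)
      have jl: "j = 2 * l" using j l assms by simp
      have l0: "0 < l" using l assms by (cases l) auto
      have odd: "odd (2 * l + 1)" by simp
      have N3: "3 \<le> 2 * l + 1" using l0 by simp
      have cK: "card {k \<in> {0..<int (2 * l + 1)}. (- k) mod int (2 * l + 1) = k} = 1"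
        using K_odd[OF odd] by simp
      have "arises_from (DG r (2 * l + 1)) Hs (r * 1) ((r * (2 * l + 1) - r * 1) div 2)"
        using DG_arises[OF assms(1) N3] unfolding cK Hs_def .
      moreover have "(r * (2 * l + 1) - r * 1) div 2 = q" using l by (simp add: algebra_simps)
      ultimately show ?thesis by auto
    qed
  qed
  show ?thesis
  proof (intro conjI iffI allI impI)
    assume "\<exists>(G :: nat monoid) H. arises_from G H r q"
    then obtain G :: "nat monoid" and H where "arises_from G H r q" by blast
    then show "r dvd 2 * q" by (rule nec_lemma)
  next
    assume "r dvd 2 * q"
    then show "\<exists>(G :: nat monoid) H. arises_from G H r q" by (rule suff)
  next
    fix G :: "('a, 'b) monoid_scheme" and H
    assume "arises_from G H r q"
    then show "r dvd 2 * q" by (rule nec_lemma)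
  qed
qed

end
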